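(* For any $\sigma$-structure $\mathbf D$, the family $\mathcal H_{\mathbf D}=\{\mathbf A\in\mathbb F:\mathbf A\to\mathbf D\}$ is regular.
   Context: Fix a type $\sigma$ (finite set of relation symbols with arities); $\sigma$-structures are finite sets with an $r$-ary relation per symbol of arity $r$; $\mathbf A\to\mathbf D$ means there is a relation-preserving map $V(\mathbf A)\to V(\mathbf D)$. $\mathrm{Inc}(\mathbf A)$ is the bipartite multigraph with parts $V(\mathbf A)$ and the blocks $(R,(x_1,\dots,x_r))$, $(x_1,\dots,x_r)\in R(\mathbf A)$, with one edge joining $x_i$ to the block for each $i$; $\mathbf A$ is a $\sigma$-forest if $\mathrm{Inc}(\mathbf A)$ has no cycles or parallel edges. $\mathbb F$ is the set of isomorphism classes of $\sigma$-forests, $\mathbb F_{\mathrm r}$ that of rooted $\sigma$-forests. $(\mathbf A,a)+(\mathbf B,b)$: disjoint union with $a,b$ identified as new root; $[(\mathbf A,a)]$ forgets the root. $\mathcal O\subseteq\mathbb F$ is regular if there are only finitely many distinct sets $\mathcal O-(\mathbf A,a)=\{(\mathbf B,b)\in\mathbb F_{\mathrm r}:[(\mathbf A,a)+(\mathbf B,b)]\in\mathcal O\}$, $(\mathbf A,a)\in\mathbb F_{\mathrm r}$. *)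

theory Defs
  imports Main
begin

text \<open>A type sigma is given by a finite type of relation symbols 'r together
with an arity function ar.\<close>

datatype ('r, 'v) struct = Struct (univ: "'v set") (rels: "'r \<Rightarrow> 'v list set")

definition is_struct :: "('r \<Rightarrow> nat) \<Rightarrow> ('r, 'v) struct \<Rightarrow> bool" where
  "is_struct ar A \<longleftrightarrow> finite (univ A) \<and>
     (\<forall>R. \<forall>t \<in> rels A R. length t = ar R \<and> set t \<subseteq> univ A)"

definition hom_exists :: "('r, 'v) struct \<Rightarrow> ('r, 'w) struct \<Rightarrow> bool" where
  "hom_exists A D \<longleftrightarrow> (\<exists>f. f ` univ A \<subseteq> univ D \<and>
     (\<forall>R. \<forall>t \<in> rels A R. map f t \<in> rels D R))"

text \<open>Blocks of the incidence multigraph Inc(A): pairs (R, t) with t in R(A).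
Block (R,t) is joined to t!i by one edge for each position i.\<close>
definition blocks :: "('r, 'v) struct \<Rightarrow> ('r \<times> 'v list) set" where
  "blocks A = {(R, t). t \<in> rels A R}"

definition no_parallel :: "('r, 'v) struct \<Rightarrow> bool" where
  "no_parallel A \<longleftrightarrow> (\<forall>(R, t) \<in> blocks A. distinct t)"

text \<open>A cycle in the bipartite graph Inc(A) (in the absence of parallel edges):
k \<ge> 2 distinct vertices vs and k distinct blocks bs such that block i is incident
with vertex i and vertex (i+1) mod k.\<close>
definition has_inc_cycle :: "('r, 'v) struct \<Rightarrow> bool" where
  "has_inc_cycle A \<longleftrightarrow> (\<exists>vs bs. length vs \<ge> 2 \<and> length bs = length vs \<and>
     distinct vs \<and> distinct bs \<and> set vs \<subseteq> univ A \<and> set bs \<subseteq> blocks A \<and>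
     (\<forall>i < length vs. vs ! i \<in> set (snd (bs ! i)) \<and>
                       vs ! ((i + 1) mod length vs) \<in> set (snd (bs ! i))))"

definition forest :: "('r \<Rightarrow> nat) \<Rightarrow> ('r, 'v) struct \<Rightarrow> bool" where
  "forest ar A \<longleftrightarrow> is_struct ar A \<and> no_parallel A \<and> \<not> has_inc_cycle A"

definition rooted_forest :: "('r \<Rightarrow> nat) \<Rightarrow> ('r, 'v) struct \<Rightarrow> 'v \<Rightarrow> bool" where
  "rooted_forest ar A a \<longleftrightarrow> forest ar A \<and> a \<in> univ A"

text \<open>C is (a copy of) [(A,a) + (B,b)]: the disjoint union of A and B with a and b
identified (root forgotten).\<close>
definition is_sum :: "('r, 'v) struct \<Rightarrow> 'v \<Rightarrow> ('r, 'v) struct \<Rightarrow> 'v \<Rightarrow> ('r, 'v) struct \<Rightarrow> bool" where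
  "is_sum A a B b C \<longleftrightarrow> (\<exists>f g. inj_on f (univ A) \<and> inj_on g (univ B) \<and>
     f a = g b \<and> univ C = f ` univ A \<union> g ` univ B \<and>
     f ` univ A \<inter> g ` univ B = {f a} \<and>
     (\<forall>R. rels C R = map f ` rels A R \<union> map g ` rels B R))"

text \<open>Isomorphism classes are represented by concrete structures over the infinite
vertex type nat (every finite structure has a copy there).\<close>
definition residual :: "('r \<Rightarrow> nat) \<Rightarrow> ('r, nat) struct set \<Rightarrow> ('r, nat) struct \<Rightarrow> nat
     \<Rightarrow> (('r, nat) struct \<times> nat) set" where
  "residual ar Fam A a = {(B, b). rooted_forest ar B b \<and> (\<exists>C. is_sum A a B b C \<and> C \<in> Fam)}"

definition regular :: "('r \<Rightarrow> nat) \<Rightarrow> ('r, nat) struct set \<Rightarrow> bool" where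
  "regular ar Fam \<longleftrightarrow> finite {residual ar Fam A a | A a. rooted_forest ar A a}"

end

theory Submission
  imports Defs
begin

definition homset :: "('r, nat) struct \<Rightarrow> nat \<Rightarrow> ('r, 'd) struct \<Rightarrow> 'd set" where
  "homset A a D = {d. \<exists>h. h ` univ A \<subseteq> univ D \<and> (\<forall>R. \<forall>t\<in>rels A R. map h t \<in> rels D R) \<and> h a = d}"

definition resof :: "('r \<Rightarrow> nat) \<Rightarrow> ('r, 'd) struct \<Rightarrow> 'd set \<Rightarrow> (('r, nat) struct \<times> nat) set" where
  "resof ar D X = {(B, b). rooted_forest ar B b \<and> X \<inter> homset B b D \<noteq> {}}"

lemma sum_exists:
  fixes A B :: "('r, nat) struct"
  assumes "finite (univ A)" "finite (univ B)" "a \<in> univ A" "b \<in> univ B"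
  shows "\<exists>C. is_sum A a B b C"
proof -
  define N where "N = Suc (Max (univ A))"
  have lt: "x < N" if "x \<in> univ A" for x
    using assms(1) that unfolding N_def by (simp add: le_imp_less_Suc)
  define g where "g x = (if x = b then a else x + N)" for x
  have inj: "inj_on g (univ B)"
    unfolding inj_on_def g_def using lt[OF assms(3)] by auto
  have ga: "g b = id a" by (simp add: g_def)
  have int: "id ` univ A \<inter> g ` univ B = {id a}"
  proof
    show "id ` univ A \<inter> g ` univ B \<subseteq> {id a}"
    proof
      fix y assume y: "y \<in> id ` univ A \<inter> g ` univ B"
      then obtain x where x: "x \<in> univ B" "y = g x" by auto
      show "y \<in> {id a}"
      proof (cases "x = b")
        case True thus ?thesis using x by (simp add: g_def)
      next
        case False
        then have "y = x + N" using x by (simp add: g_def)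
        moreover have "y < N" using y lt by auto
        ultimately show ?thesis by simp
      qed
    qed
    show "{id a} \<subseteq> id ` univ A \<inter> g ` univ B"
      using assms(3,4) ga by (metis Int_iff empty_subsetI image_eqI insert_subset)
  qed
  let ?C = "Struct (id ` univ A \<union> g ` univ B) (\<lambda>R. map id ` rels A R \<union> map g ` rels B R)"
  have "is_sum A a B b ?C"
    unfolding is_sum_def
    by (rule exI[of _ id], rule exI[of _ g]) (use inj ga int in auto)
  thus ?thesis by blast
qed

lemma trans_exists:
  fixes P :: "nat \<Rightarrow> bool"
  assumes "i0 < k" "P i0" "j0 < k" "\<not> P j0"
  shows "\<exists>i<k. P i \<and> \<not> P (Suc i mod k)"
proof (rule ccontr)
  assume "\<not> ?thesis"
  then have st: "\<And>i. i < k \<Longrightarrow> P i \<Longrightarrow> P (Suc i mod k)" by blast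
  have "P ((i0 + n) mod k)" for n
  proof (induction n)
    case 0 thus ?case using assms by simp
  next
    case (Suc n)
    have "P (Suc ((i0 + n) mod k) mod k)"
      using st[OF _ Suc] assms(1) by simp
    thus ?case by (simp add: mod_Suc_eq)
  qed
  from this[of "j0 + k - i0"] have "P ((j0 + k) mod k)"
    using assms(1) by (simp add: add.commute)
  thus False using assms(3,4) by simp
qed

lemma suc_mod_inj:
  assumes "i < k" "j < k" "Suc i mod k = Suc j mod k"
  shows "i = j"
proof -
  have "Suc i mod k = (if Suc i = k then 0 else Suc i)" "Suc j mod k = (if Suc j = k then 0 else Suc j)"
    using assms by auto
  thus ?thesis using assms(3) by (auto split: if_splits)
qed

lemma pull_cycle:
  assumes injf: "inj_on f (univ A)" and st: "is_struct ar A"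
    and len: "length vs \<ge> 2" "length bs = length vs"
    and dv: "distinct vs" and db: "distinct bs"
    and blk: "\<forall>i<length vs. \<exists>R t. bs ! i = (R, map f t) \<and> t \<in> rels A R"
    and inc: "\<forall>i < length vs. vs ! i \<in> set (snd (bs ! i)) \<and>
                       vs ! ((i + 1) mod length vs) \<in> set (snd (bs ! i))"
  shows "has_inc_cycle A"
proof -
  define h where "h = inv_into (univ A) f"
  define vs' where "vs' = map h vs"
  define bs' where "bs' = map (\<lambda>(R, u). (R, map h u)) bs"
  have sub: "set t \<subseteq> univ A" if "t \<in> rels A R" for t R
    using st that unfolding is_struct_def by blast
  have hf: "map h (map f t) = t" if "set t \<subseteq> univ A" for t
    using that injf unfolding h_def by (induction t) auto
  have bs'i: "bs' ! i = (R, t)" if "i < length vs" "bs ! i = (R, map f t)" "t \<in> rels A R" for i R t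
    using that len hf[OF sub[OF that(3)]] unfolding bs'_def by simp
  have vsf: "vs ! i \<in> f ` univ A" if ilt: "i < length vs" for i
  proof -
    obtain R t where rt: "bs ! i = (R, map f t)" "t \<in> rels A R" using blk ilt by blast
    have "vs ! i \<in> set (map f t)" using inc ilt rt by auto
    thus ?thesis using sub[OF rt(2)] by auto
  qed
  have incl: "h (vs ! j) \<in> set t" if "j < length vs" "vs ! j \<in> set (map f t)" "set t \<subseteq> univ A" for j t
    using that injf unfolding h_def by auto
  show ?thesis
    unfolding has_inc_cycle_def
  proof (intro exI conjI allI impI)
    show "2 \<le> length vs'" "length bs' = length vs'" using len by (auto simp: vs'_def bs'_def)
    show "distinct vs'"
      unfolding vs'_def
    proof (rule distinct_map[THEN iffD2], rule conjI[OF dv])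
      have "inj_on h (f ` univ A)" unfolding h_def by (rule inj_on_inv_into) simp
      moreover have "set vs \<subseteq> f ` univ A" using vsf by (auto simp: in_set_conv_nth)
      ultimately show "inj_on h (set vs)" by (rule inj_on_subset)
    qed
    show "distinct bs'"
      unfolding distinct_conv_nth
    proof (intro allI impI)
      fix i j assume ij: "i < length bs'" "j < length bs'" "i \<noteq> j"
      obtain R t where 1: "bs ! i = (R, map f t)" "t \<in> rels A R" using blk ij len by (auto simp: bs'_def)
      obtain R' t' where 2: "bs ! j = (R', map f t')" "t' \<in> rels A R'" using blk ij len by (auto simp: bs'_def)
      have "bs ! i \<noteq> bs ! j" using db ij by (auto simp: bs'_def nth_eq_iff_index_eq)
      thus "bs' ! i \<noteq> bs' ! j"
        using bs'i[OF _ 1] bs'i[OF _ 2] ij len 1 2 by (auto simp: bs'_def)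
    qed
    show "set vs' \<subseteq> univ A"
      using vsf unfolding vs'_def h_def by (auto simp: in_set_conv_nth inv_into_into)
    show "set bs' \<subseteq> blocks A"
    proof
      fix x assume "x \<in> set bs'"
      then obtain i where i: "i < length vs" "x = bs' ! i" using len by (auto simp: in_set_conv_nth bs'_def)
      obtain R t where "bs ! i = (R, map f t)" "t \<in> rels A R" using blk i by blast
      thus "x \<in> blocks A" using bs'i i by (auto simp: blocks_def)
    qed
  next
    fix i assume i: "i < length vs'"
    then have i': "i < length vs" by (simp add: vs'_def)
    obtain R t where 1: "bs ! i = (R, map f t)" "t \<in> rels A R" using blk i' by blast
    have j: "(i + 1) mod length vs < length vs" using len by (intro mod_less_divisor) auto
    show "vs' ! i \<in> set (snd (bs' ! i))"
      using incl[OF i' _ sub[OF 1(2)]] inc i' 1 bs'i[OF i' 1] by (auto simp: vs'_def)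
    show "vs' ! ((i + 1) mod length vs') \<in> set (snd (bs' ! i))"
      using incl[OF j _ sub[OF 1(2)]] inc i' 1 bs'i[OF i' 1] j by (auto simp: vs'_def)
  qed
qed


lemma sum_forest:
  assumes sum: "is_sum A a B b C" and fA: "forest ar A" and fB: "forest ar B"
  shows "forest ar C"
proof -
  obtain f g where injf: "inj_on f (univ A)" and injg: "inj_on g (univ B)" and fg: "f a = g b"
    and uC: "univ C = f ` univ A \<union> g ` univ B" and int: "f ` univ A \<inter> g ` univ B = {f a}"
    and rC: "\<And>R. rels C R = map f ` rels A R \<union> map g ` rels B R"
    using sum unfolding is_sum_def by blast
  have sA: "is_struct ar A" and sB: "is_struct ar B" using fA fB by (auto simp: forest_def)
  have subA: "set t \<subseteq> univ A" "length t = ar R" if "t \<in> rels A R" for t R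
    using sA that unfolding is_struct_def by blast+
  have subB: "set t \<subseteq> univ B" "length t = ar R" if "t \<in> rels B R" for t R
    using sB that unfolding is_struct_def by blast+
  have stC: "is_struct ar C"
    unfolding is_struct_def
  proof (rule conjI)
    show "finite (univ C)" using sA sB uC by (simp add: is_struct_def)
  next
    show "\<forall>R. \<forall>t\<in>rels C R. length t = ar R \<and> set t \<subseteq> univ C"
    proof (intro allI ballI)
    fix R t assume "t \<in> rels C R"
    then consider u where "u \<in> rels A R" "t = map f u" | u where "u \<in> rels B R" "t = map g u"
      using rC by blast
    then show "length t = ar R \<and> set t \<subseteq> univ C"
      by cases (use subA subB uC in fastforce)+
    qed
  qed
  have npC: "no_parallel C"
    unfolding no_parallel_def blocks_def
  proof (clarify)
    fix R t assume "t \<in> rels C R"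
    then consider u where "u \<in> rels A R" "t = map f u" | u where "u \<in> rels B R" "t = map g u"
      using rC by blast
    then show "distinct t"
    proof cases
      case 1
      have "distinct u" using fA 1 unfolding forest_def no_parallel_def blocks_def by auto
      thus ?thesis using 1 subA injf by (simp add: distinct_map inj_on_subset)
    next
      case 2
      have "distinct u" using fB 2 unfolding forest_def no_parallel_def blocks_def by auto
      thus ?thesis using 2 subB injg by (simp add: distinct_map inj_on_subset)
    qed
  qed
  have ncA: "\<not> has_inc_cycle A" and ncB: "\<not> has_inc_cycle B" using fA fB by (auto simp: forest_def)
  have "\<not> has_inc_cycle C"
  proof
    assume "has_inc_cycle C"
    then obtain vs bs where len: "length vs \<ge> 2" "length bs = length vs"
      and dv: "distinct vs" and db: "distinct bs" and sv: "set vs \<subseteq> univ C"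
      and sb: "set bs \<subseteq> blocks C"
      and inc: "\<forall>i < length vs. vs ! i \<in> set (snd (bs ! i)) \<and>
                       vs ! ((i + 1) mod length vs) \<in> set (snd (bs ! i))"
      unfolding has_inc_cycle_def by blast
    define k where "k = length vs"
    define P where "P i = (\<exists>R t. bs ! i = (R, map f t) \<and> t \<in> rels A R)" for i
    define Q where "Q i = (\<exists>R t. bs ! i = (R, map g t) \<and> t \<in> rels B R)" for i
    have PQ: "P i \<or> Q i" if "i < k" for i
    proof -
      have "bs ! i \<in> blocks C" using sb that len k_def by auto
      then obtain R u where "bs ! i = (R, u)" "u \<in> rels C R" by (auto simp: blocks_def)
      thus ?thesis using rC[of R] unfolding P_def Q_def by auto
    qed
    have vP: "x \<in> f ` univ A" if "P i" "x \<in> set (snd (bs ! i))" for i x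
      using that subA unfolding P_def by fastforce
    have vQ: "x \<in> g ` univ B" if "Q i" "x \<in> set (snd (bs ! i))" for i x
      using that subB unfolding Q_def by fastforce
    have kpos: "k > 0" using len k_def by auto
    have inc1: "vs ! i \<in> set (snd (bs ! i))" "vs ! (Suc i mod k) \<in> set (snd (bs ! i))" if "i < k" for i
      using inc that k_def by auto
    show False
    proof (cases "\<forall>i<k. P i")
      case True
      have "has_inc_cycle A"
        by (rule pull_cycle[OF injf sA len dv db]) (use True inc in \<open>auto simp: P_def k_def\<close>)
      thus False using ncA by simp
    next
      case False
      then obtain j0 where j0: "j0 < k" "\<not> P j0" by blast
      show False
      proof (cases "\<forall>i<k. \<not> P i")
        case True
        have "\<forall>i<k. Q i" using True PQ by blast
        hence "has_inc_cycle B"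
          by (intro pull_cycle[OF injg sB len dv db]) (use inc in \<open>auto simp: Q_def k_def\<close>)
        thus False using ncB by simp
      next
        case False
        then obtain i0 where i0: "i0 < k" "P i0" by blast
        obtain i where i: "i < k" "P i" "\<not> P (Suc i mod k)"
          using trans_exists[of i0 k P j0] i0 j0 by blast
        obtain j where j: "j < k" "\<not> P j" "P (Suc j mod k)"
          using trans_exists[of j0 k "\<lambda>i. \<not> P i" i0] i0 j0 by blast
        have si: "Suc i mod k < k" "Suc j mod k < k" using kpos by simp_all
        have "vs ! (Suc i mod k) \<in> f ` univ A \<inter> g ` univ B"
          using vP[OF i(2) inc1(2)[OF i(1)]] vQ[of "Suc i mod k"] PQ[OF si(1)] i(3) inc1(1)[OF si(1)]
          by blast
        hence e1: "vs ! (Suc i mod k) = f a" using int by blast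
        have "vs ! (Suc j mod k) \<in> f ` univ A \<inter> g ` univ B"
          using vQ[of j] PQ[OF j(1)] j(2) inc1(2)[OF j(1)] vP[OF j(3) inc1(1)[OF si(2)]]
          by blast
        hence e2: "vs ! (Suc j mod k) = f a" using int by blast
        have "Suc i mod k = Suc j mod k"
          using e1 e2 dv si k_def by (metis nth_eq_iff_index_eq)
        hence "i = j" using suc_mod_inj i(1) j(1) by blast
        thus False using i j by simp
      qed
    qed
  qed
  thus ?thesis using stC npC by (simp add: forest_def)
qed


lemma sum_hom:
  fixes D :: "('r, 'd) struct"
  assumes sum: "is_sum A a B b C" and sA: "is_struct ar A" and sB: "is_struct ar B"
    and bB: "b \<in> univ B" and aA: "a \<in> univ A"
  shows "hom_exists C D \<longleftrightarrow> homset A a D \<inter> homset B b D \<noteq> {}"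
proof -
  obtain f g where injf: "inj_on f (univ A)" and injg: "inj_on g (univ B)" and fg: "f a = g b"
    and uC: "univ C = f ` univ A \<union> g ` univ B" and int: "f ` univ A \<inter> g ` univ B = {f a}"
    and rC: "\<And>R. rels C R = map f ` rels A R \<union> map g ` rels B R"
    using sum unfolding is_sum_def by blast
  have subA: "set t \<subseteq> univ A" if "t \<in> rels A R" for t R
    using sA that unfolding is_struct_def by blast
  have subB: "set t \<subseteq> univ B" if "t \<in> rels B R" for t R
    using sB that unfolding is_struct_def by blast
  show ?thesis
  proof
    assume "hom_exists C D"
    then obtain p where p1: "p ` univ C \<subseteq> univ D" and p2: "\<forall>R. \<forall>t \<in> rels C R. map p t \<in> rels D R"
      unfolding hom_exists_def by blast
    have pA: "map (p \<circ> f) t \<in> rels D R" if "t \<in> rels A R" for t R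
    proof -
      have "map f t \<in> rels C R" using rC that by blast
      hence "map p (map f t) \<in> rels D R" using p2 by blast
      thus ?thesis by simp
    qed
    have pB: "map (p \<circ> g) t \<in> rels D R" if "t \<in> rels B R" for t R
    proof -
      have "map g t \<in> rels C R" using rC that by blast
      hence "map p (map g t) \<in> rels D R" using p2 by blast
      thus ?thesis by simp
    qed
    have "p (f a) \<in> homset A a D"
      unfolding homset_def
      by (rule CollectI, rule exI[of _ "p \<circ> f"]) (use p1 pA uC in auto)
    moreover have "p (f a) \<in> homset B b D"
      unfolding homset_def
      by (rule CollectI, rule exI[of _ "p \<circ> g"]) (use p1 pB uC fg in auto)
    ultimately show "homset A a D \<inter> homset B b D \<noteq> {}" by blast
  next
    assume "homset A a D \<inter> homset B b D \<noteq> {}"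
    then obtain d where d: "d \<in> homset A a D" "d \<in> homset B b D" by blast
    obtain hA where hA1: "hA ` univ A \<subseteq> univ D" and hA2: "\<forall>R. \<forall>t\<in>rels A R. map hA t \<in> rels D R"
      and hAd: "hA a = d"
      using d(1) unfolding homset_def by blast
    obtain hB where hB1: "hB ` univ B \<subseteq> univ D" and hB2: "\<forall>R. \<forall>t\<in>rels B R. map hB t \<in> rels D R"
      and hBd: "hB b = d"
      using d(2) unfolding homset_def by blast
    have hab: "hA a = hB b" using hAd hBd by simp
    define p where "p y = (if y \<in> f ` univ A then hA (inv_into (univ A) f y) else hB (inv_into (univ B) g y))" for y
    have pf: "p (f x) = hA x" if "x \<in> univ A" for x
      using that injf by (simp add: p_def)
    have pg: "p (g x) = hB x" if "x \<in> univ B" for x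
    proof (cases "g x \<in> f ` univ A")
      case True
      hence "g x = f a" using int that by blast
      hence "g x = g b" using fg by simp
      hence "x = b" using injg that bB by (simp add: inj_on_eq_iff)
      thus ?thesis using True hab fg[symmetric] injf aA by (simp add: p_def)
    qed (use that injg in \<open>simp add: p_def\<close>)
    have "hom_exists C D"
      unfolding hom_exists_def
    proof (rule exI[of _ p], intro conjI allI ballI)
      show "p ` univ C \<subseteq> univ D" using uC pf pg hA1 hB1 by auto
    next
      fix R t assume "t \<in> rels C R"
      then consider u where "u \<in> rels A R" "t = map f u" | u where "u \<in> rels B R" "t = map g u"
        using rC by blast
      then show "map p t \<in> rels D R"
      proof cases
        case 1
        have eq: "map p t = map hA u" using subA[OF 1(1)] pf 1(2) by (auto simp: subset_iff)
        show ?thesis using eq hA2 1(1) by simp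
      next
        case 2
        have eq: "map p t = map hB u" using subB[OF 2(1)] pg 2(2) by (auto simp: subset_iff)
        show ?thesis using eq hB2 2(1) by simp
      qed
    qed
    thus "hom_exists C D" .
  qed
qed

lemma residual_eq:
  fixes D :: "('r, 'd) struct"
  assumes "rooted_forest ar A a"
  shows "residual ar {A :: ('r, nat) struct. forest ar A \<and> hom_exists A D} A a = resof ar D (homset A a D)"
proof -
  have fA: "forest ar A" and aA: "a \<in> univ A" using assms by (auto simp: rooted_forest_def)
  have sA: "is_struct ar A" using fA by (simp add: forest_def)
  show ?thesis
  proof (rule set_eqI, clarify)
    fix B b
    show "((B, b) \<in> residual ar {A. forest ar A \<and> hom_exists A D} A a) = ((B, b) \<in> resof ar D (homset A a D))"
    proof
      assume "(B, b) \<in> residual ar {A. forest ar A \<and> hom_exists A D} A a"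
      then obtain C where rf: "rooted_forest ar B b" and C: "is_sum A a B b C" "hom_exists C D"
        unfolding residual_def by blast
      have sB: "is_struct ar B" and bB: "b \<in> univ B" using rf by (auto simp: rooted_forest_def forest_def)
      have "homset A a D \<inter> homset B b D \<noteq> {}" using sum_hom[OF C(1) sA sB bB aA, where D=D] C(2) by blast
      thus "(B, b) \<in> resof ar D (homset A a D)"
        using rf by (simp add: resof_def)
    next
      assume "(B, b) \<in> resof ar D (homset A a D)"
      then have rf: "rooted_forest ar B b" and ne: "homset A a D \<inter> homset B b D \<noteq> {}"
        by (auto simp: resof_def)
      have fB: "forest ar B" and bB: "b \<in> univ B" using rf by (auto simp: rooted_forest_def)
      have sB: "is_struct ar B" using fB by (simp add: forest_def)
      obtain C where C: "is_sum A a B b C"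
        using sum_exists[of A B a b] sA sB aA bB by (auto simp: is_struct_def)
      have "forest ar C" using sum_forest[OF C fA fB] .
      moreover have "hom_exists C D" using sum_hom[OF C sA sB bB aA, where D=D] ne by blast
      ultimately show "(B, b) \<in> residual ar {A. forest ar A \<and> hom_exists A D} A a"
        using rf C unfolding residual_def by blast
    qed
  qed
qed

theorem lemma3p3:
  fixes ar :: "'r::finite \<Rightarrow> nat" and D :: "('r, 'd) struct"
  assumes "is_struct ar D"
  shows "regular ar {A :: ('r, nat) struct. forest ar A \<and> hom_exists A D}"
proof -
  have "{residual ar {A :: ('r, nat) struct. forest ar A \<and> hom_exists A D} A a | A a. rooted_forest ar A a}
        \<subseteq> resof ar D ` Pow (univ D)"
  proof clarify
    fix A :: "('r, nat) struct" and a assume rf: "rooted_forest ar A a"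
    have "homset A a D \<subseteq> univ D"
      using rf unfolding homset_def rooted_forest_def by blast
    thus "residual ar {A :: ('r, nat) struct. forest ar A \<and> hom_exists A D} A a \<in> resof ar D ` Pow (univ D)"
      using residual_eq[OF rf] by blast
  qed
  moreover have "finite (resof ar D ` Pow (univ D))"
    using assms by (simp add: is_struct_def)
  ultimately show ?thesis unfolding regular_def by (rule finite_subset)
qed

end
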